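(* Consider the dynamic panel logit AR(2) model with $T=4$: binary outcomes $Y_{-1},Y_0,Y_1,\dots,Y_4\in\{0,1\}$, regressors $X=(X_1,\dots,X_4)\in\mathbb{R}^{K\times4}$, fixed effect $A\in\mathbb{R}$, with, for $t\in\{1,\dots,4\}$, $$\Pr(Y_t=1\mid Y_{-1},\dots,Y_{t-1},X,A)=\frac{\exp(X_t'\beta_0+Y_{t-1}\gamma_{0,1}+Y_{t-2}\gamma_{0,2}+A)}{1+\exp(X_t'\beta_0+Y_{t-1}\gamma_{0,1}+Y_{t-2}\gamma_{0,2}+A)}$$ and true parameters $\beta_0\in\mathbb{R}^K$, $\gamma_0=(\gamma_{0,1},\gamma_{0,2})\in\mathbb{R}^2$. For initial conditions $y^{(0)}=(y_{-1},y_0)\in\{0,1\}^2$, $y=(y_1,\dots,y_4)\in\{0,1\}^4$, $x\in\mathbb{R}^{K\times4}$, $\beta\in\mathbb{R}^K$, $\gamma=(\gamma_1,\gamma_2)\in\mathbb{R}^2$, let $z_t=x_t'\beta+y_{t-1}\gamma_1+y_{t-2}\gamma_2$ and $z_{ts}=z_t-z_s$. Define $$m^{(a)}_{y^{(0)}}=\begin{cases}e^{z_{23}}-e^{z_{43}}&y=(0,0,1,0),\\ e^{z_{24}}-1&y=(0,0,1,1),\\ -1&(y_1,y_2)=(0,1),\\ e^{z_{41}+\gamma_1}&(y_1,y_2,y_3)=(1,0,0),\\ e^{z_{41}}[1+e^{z_{23}}-e^{z_{43}}]&y=(1,0,1,0),\\ e^{z_{21}}&y=(1,0,1,1),\\ 0&\text{otherwise},\end{cases}\qquad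 m^{(b)}_{y^{(0)}}=\begin{cases}e^{z_{12}}&y=(0,1,0,0),\\ e^{z_{14}}[1+e^{z_{32}}-e^{z_{34}}]&y=(0,1,0,1),\\ e^{z_{14}+\gamma_1}&(y_1,y_2,y_3)=(0,1,1),\\ -1&(y_1,y_2)=(1,0),\\ e^{z_{42}}-1&y=(1,1,0,0),\\ e^{z_{32}}-e^{z_{34}}&y=(1,1,0,1),\\0&\text{otherwise},\end{cases}$$ $$m^{(c)}_{y^{(0)}}=\begin{cases}[e^{z_{24}}-1][1-e^{z_{34}}]&y=(0,0,0,1),\\ e^{z_{24}+\gamma_1}-1&(y_1,y_2,y_3)=(0,0,1),\\ -1&(y_1,y_2)=(0,1),\\ e^{z_{41}}&y=(1,0,0,0),\\ e^{z_{21}}[1+e^{z_{32}}-e^{z_{34}}]&y=(1,0,0,1),\\ e^{z_{21}}&(y_1,y_2,y_3)=(1,0,1),\\0&\text{otherwise},\end{cases}\qquad m^{(d)}_{y^{(0)}}=\begin{cases}e^{z_{12}}&(y_1,y_2,y_3)=(0,1,0),\\ e^{z_{12}}[1+e^{z_{23}}-e^{z_{43}}]&y=(0,1,1,0),\\ e^{z_{14}}&y=(0,1,1,1),\\ -1&(y_1,y_2)=(1,0),\\ e^{z_{42}+\gamma_1}-1&(y_1,y_2,y_3)=(1,1,0),\\ [e^{z_{42}}-1][1-e^{z_{43}}]&y=(1,1,1,0),\\0&\text{otherwise},\end{cases}$$ all as functions of $(y,x,\beta,\gamma)$. Then for all $y^{(0)}\in\{0,1\}^2$, $x\in\mathbb{R}^{K\times4}$,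 $\alpha\in\mathbb{R}$ and $\xi\in\{a,b,c,d\}$, $$\mathbb{E}\big[m^{(\xi)}_{y^{(0)}}(Y,X,\beta_0,\gamma_0)\mid (Y_{-1},Y_0)=y^{(0)},X=x,A=\alpha\big]=0,$$ where $Y=(Y_1,\dots,Y_4)$.
   Context: The joint distribution of the initial conditions, $X$ and $A$ is unrestricted; only the conditional law of $(Y_1,\dots,Y_4)$ given $((Y_{-1},Y_0),X,A)$ is specified by the model. In $z_t$, $y_{-1},y_0$ are the initial conditions. *)

theory Defs
  imports "HOL-Analysis.Analysis"
begin

text \<open>Outcome path: Y(-1), Y(0) are the initial conditions, Y(1..4) the outcomes.
  Regressors: x t :: real^'k for t = 1..4 (K = CARD('k)).\<close>

definition path :: "bool \<Rightarrow> bool \<Rightarrow> bool \<Rightarrow> bool \<Rightarrow> bool \<Rightarrow> bool \<Rightarrow> int \<Rightarrow> bool" where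
  "path ym1 y0 y1 y2 y3 y4 t =
     (if t = -1 then ym1 else if t = 0 then y0 else if t = 1 then y1
      else if t = 2 then y2 else if t = 3 then y3 else y4)"

definition zz :: "(int \<Rightarrow> bool) \<Rightarrow> (int \<Rightarrow> real^'k) \<Rightarrow> real^'k \<Rightarrow> real \<Rightarrow> real \<Rightarrow> int \<Rightarrow> real" where
  "zz Y x \<beta> g1 g2 t = x t \<bullet> \<beta> + of_bool (Y (t - 1)) * g1 + of_bool (Y (t - 2)) * g2"

definition logistic :: "real \<Rightarrow> real" where
  "logistic u = exp u / (1 + exp u)"

definition path_prob :: "(int \<Rightarrow> bool) \<Rightarrow> (int \<Rightarrow> real^'k) \<Rightarrow> real^'k \<Rightarrow> real \<Rightarrow> real \<Rightarrow> real \<Rightarrow> real" where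
  "path_prob Y x \<beta> g1 g2 \<alpha> =
     (\<Prod>t\<in>{1..4::int}. (let p = logistic (zz Y x \<beta> g1 g2 t + \<alpha>)
                           in if Y t then p else 1 - p))"

datatype xi = Xa | Xb | Xc | Xd

definition m_fun :: "xi \<Rightarrow> (int \<Rightarrow> bool) \<Rightarrow> (int \<Rightarrow> real^'k) \<Rightarrow> real^'k \<Rightarrow> real \<Rightarrow> real \<Rightarrow> real" where
  "m_fun \<xi> Y x \<beta> g1 g2 =
    (let z = zz Y x \<beta> g1 g2; y1 = Y 1; y2 = Y 2; y3 = Y 3; y4 = Y 4;
         e = (\<lambda>t s. exp (z t - z s)) in
     case \<xi> of
       Xa \<Rightarrow>
        (if (y1,y2,y3,y4) = (False,False,True,False) then e 2 3 - e 4 3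
         else if (y1,y2,y3,y4) = (False,False,True,True) then e 2 4 - 1
         else if (y1,y2) = (False,True) then -1
         else if (y1,y2,y3) = (True,False,False) then exp (z 4 - z 1 + g1)
         else if (y1,y2,y3,y4) = (True,False,True,False) then e 4 1 * (1 + e 2 3 - e 4 3)
         else if (y1,y2,y3,y4) = (True,False,True,True) then e 2 1
         else 0)
     | Xb \<Rightarrow>
        (if (y1,y2,y3,y4) = (False,True,False,False) then e 1 2
         else if (y1,y2,y3,y4) = (False,True,False,True) then e 1 4 * (1 + e 3 2 - e 3 4)
         else if (y1,y2,y3) = (False,True,True) then exp (z 1 - z 4 + g1)
         else if (y1,y2) = (True,False) then -1
         else if (y1,y2,y3,y4) = (True,True,False,False) then e 4 2 - 1
         else if (y1,y2,y3,y4) = (True,True,False,True) then e 3 2 - e 3 4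
         else 0)
     | Xc \<Rightarrow>
        (if (y1,y2,y3,y4) = (False,False,False,True) then (e 2 4 - 1) * (1 - e 3 4)
         else if (y1,y2,y3) = (False,False,True) then exp (z 2 - z 4 + g1) - 1
         else if (y1,y2) = (False,True) then -1
         else if (y1,y2,y3,y4) = (True,False,False,False) then e 4 1
         else if (y1,y2,y3,y4) = (True,False,False,True) then e 2 1 * (1 + e 3 2 - e 3 4)
         else if (y1,y2,y3) = (True,False,True) then e 2 1
         else 0)
     | Xd \<Rightarrow>
        (if (y1,y2,y3) = (False,True,False) then e 1 2
         else if (y1,y2,y3,y4) = (False,True,True,False) then e 1 2 * (1 + e 2 3 - e 4 3)
         else if (y1,y2,y3,y4) = (False,True,True,True) then e 1 4
         else if (y1,y2) = (True,False) then -1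
         else if (y1,y2,y3) = (True,True,False) then exp (z 4 - z 2 + g1) - 1
         else if (y1,y2,y3,y4) = (True,True,True,False) then (e 4 2 - 1) * (1 - e 4 3)
         else 0))"

definition cond_exp_m :: "xi \<Rightarrow> bool \<Rightarrow> bool \<Rightarrow> (int \<Rightarrow> real^'k) \<Rightarrow> real \<Rightarrow> real^'k \<Rightarrow> real \<Rightarrow> real \<Rightarrow> real" where
  "cond_exp_m \<xi> ym1 y0 x \<alpha> \<beta>0 g01 g02 =
     (\<Sum>y1\<in>UNIV. \<Sum>y2\<in>UNIV. \<Sum>y3\<in>UNIV. \<Sum>y4\<in>UNIV.
        path_prob (path ym1 y0 y1 y2 y3 y4) x \<beta>0 g01 g02 \<alpha>
        * m_fun \<xi> (path ym1 y0 y1 y2 y3 y4) x \<beta>0 g01 g02)"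

end

theory Submission
  imports Defs
begin

definition mgen :: "xi \<Rightarrow> bool \<Rightarrow> bool \<Rightarrow> bool \<Rightarrow> bool \<Rightarrow> (int \<Rightarrow> int \<Rightarrow> real) \<Rightarrow> real \<Rightarrow> real" where
  "mgen \<xi> y1 y2 y3 y4 e G =
    (case \<xi> of
       Xa \<Rightarrow>
        (if (y1,y2,y3,y4) = (False,False,True,False) then e 2 3 - e 4 3
         else if (y1,y2,y3,y4) = (False,False,True,True) then e 2 4 - 1
         else if (y1,y2) = (False,True) then -1
         else if (y1,y2,y3) = (True,False,False) then e 4 1 * G
         else if (y1,y2,y3,y4) = (True,False,True,False) then e 4 1 * (1 + e 2 3 - e 4 3)
         else if (y1,y2,y3,y4) = (True,False,True,True) then e 2 1
         else 0)
     | Xb \<Rightarrow>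
        (if (y1,y2,y3,y4) = (False,True,False,False) then e 1 2
         else if (y1,y2,y3,y4) = (False,True,False,True) then e 1 4 * (1 + e 3 2 - e 3 4)
         else if (y1,y2,y3) = (False,True,True) then e 1 4 * G
         else if (y1,y2) = (True,False) then -1
         else if (y1,y2,y3,y4) = (True,True,False,False) then e 4 2 - 1
         else if (y1,y2,y3,y4) = (True,True,False,True) then e 3 2 - e 3 4
         else 0)
     | Xc \<Rightarrow>
        (if (y1,y2,y3,y4) = (False,False,False,True) then (e 2 4 - 1) * (1 - e 3 4)
         else if (y1,y2,y3) = (False,False,True) then e 2 4 * G - 1
         else if (y1,y2) = (False,True) then -1
         else if (y1,y2,y3,y4) = (True,False,False,False) then e 4 1
         else if (y1,y2,y3,y4) = (True,False,False,True) then e 2 1 * (1 + e 3 2 - e 3 4)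
         else if (y1,y2,y3) = (True,False,True) then e 2 1
         else 0)
     | Xd \<Rightarrow>
        (if (y1,y2,y3) = (False,True,False) then e 1 2
         else if (y1,y2,y3,y4) = (False,True,True,False) then e 1 2 * (1 + e 2 3 - e 4 3)
         else if (y1,y2,y3,y4) = (False,True,True,True) then e 1 4
         else if (y1,y2) = (True,False) then -1
         else if (y1,y2,y3) = (True,True,False) then e 4 2 * G - 1
         else if (y1,y2,y3,y4) = (True,True,True,False) then (e 4 2 - 1) * (1 - e 4 3)
         else 0))"

lemma pnz: "(0::real) < a \<Longrightarrow> a \<noteq> 0" by simp

definition qq :: "real \<Rightarrow> bool \<Rightarrow> real" where "qq R b = (if b then R / (1 + R) else 1 / (1 + R))"
definition gp :: "bool \<Rightarrow> real \<Rightarrow> real" where "gp b G = (if b then G else 1)"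

definition Rp :: "real \<Rightarrow> real \<Rightarrow> real \<Rightarrow> real \<Rightarrow> real \<Rightarrow> real \<Rightarrow> bool \<Rightarrow> bool \<Rightarrow> bool \<Rightarrow> int \<Rightarrow> real" where
 "Rp R1 B2 B3 B4 G1 G2 y1 y2 y3 t = (if t = 1 then R1 else if t = 2 then B2 * gp y1 G1
    else if t = 3 then B3 * gp y2 G1 * gp y1 G2 else B4 * gp y3 G1 * gp y2 G2)"

definition IN4 :: "xi \<Rightarrow> real \<Rightarrow> real \<Rightarrow> real \<Rightarrow> real \<Rightarrow> real \<Rightarrow> real \<Rightarrow> bool \<Rightarrow> bool \<Rightarrow> bool \<Rightarrow> real" where
 "IN4 \<xi> R1 B2 B3 B4 G1 G2 y1 y2 y3 =
        (\<Sum>y4\<in>UNIV. qq (B4 * gp y3 G1 * gp y2 G2) y4 *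
           mgen \<xi> y1 y2 y3 y4
             (\<lambda>t s. Rp R1 B2 B3 B4 G1 G2 y1 y2 y3 t / Rp R1 B2 B3 B4 G1 G2 y1 y2 y3 s) G1)"

definition IN :: "xi \<Rightarrow> real \<Rightarrow> real \<Rightarrow> real \<Rightarrow> real \<Rightarrow> real \<Rightarrow> real \<Rightarrow> bool \<Rightarrow> bool \<Rightarrow> real" where
 "IN \<xi> R1 B2 B3 B4 G1 G2 y1 y2 =
      (\<Sum>y3\<in>UNIV. qq (B3 * gp y2 G1 * gp y1 G2) y3 * IN4 \<xi> R1 B2 B3 B4 G1 G2 y1 y2 y3)"

definition NEST :: "xi \<Rightarrow> real \<Rightarrow> real \<Rightarrow> real \<Rightarrow> real \<Rightarrow> real \<Rightarrow> real \<Rightarrow> real" where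
 "NEST \<xi> R1 B2 B3 B4 G1 G2 =
   (\<Sum>y1\<in>UNIV. qq R1 y1 * (\<Sum>y2\<in>UNIV. qq (B2 * gp y1 G1) y2 * IN \<xi> R1 B2 B3 B4 G1 G2 y1 y2))"

lemma sum_qq: "(\<Sum>y\<in>UNIV. qq R y * f y) = (R * f True + f False) / (1 + R)"
  by (simp add: UNIV_bool qq_def add_divide_distrib)

lemma IN4_a:
  assumes "R1 > 0" "B2 > 0" "B3 > 0" "B4 > 0" "G1 > 0" "G2 > 0"
  shows "IN4 Xa R1 B2 B3 B4 G1 G2 y1 y2 y3 =
    (if y1 then (if y2 then 0 else if y3 then (B4*G1/R1)*(1+(B2*G1-B4*G1)/(B3*G2)+B2*G1)/(1+B4*G1) else B4*G1/R1)
     else (if y2 then -1 else if y3 then (B2-B4*G1)*(1+B3)/(B3*(1+B4*G1)) else 0))"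
  using assms
  apply (cases y1; cases y2; cases y3; simp only: IN4_def sum_qq)
  apply (simp_all add: gp_def mgen_def Rp_def)
  apply (simp_all add: field_simps add_pos_pos mult_pos_pos pnz)
  done

lemma IN_a:
  assumes "R1 > 0" "B2 > 0" "B3 > 0" "B4 > 0" "G1 > 0" "G2 > 0"
  shows "IN Xa R1 B2 B3 B4 G1 G2 y1 y2 =
    (if y1 then (if y2 then 0 else (B4*G1/R1)*(1+B2*G1)/(1+B4*G1))
     else (if y2 then -1 else (B2-B4*G1)/(1+B4*G1)))"
  using assms
  apply (cases y1; cases y2; simp only: IN_def sum_qq)
  apply (simp_all add: gp_def IN4_a)
  apply (simp_all add: field_simps add_pos_pos mult_pos_pos pnz)
  done

lemma NEST_a:
  assumes "R1 > 0" "B2 > 0" "B3 > 0" "B4 > 0" "G1 > 0" "G2 > 0"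
  shows "NEST Xa R1 B2 B3 B4 G1 G2 = 0"
  using assms
  apply (simp only: NEST_def sum_qq)
  apply (simp add: IN_a gp_def)
  apply (simp_all add: field_simps add_pos_pos mult_pos_pos pnz)
  done

lemma IN4_b:
  assumes "R1 > 0" "B2 > 0" "B3 > 0" "B4 > 0" "G1 > 0" "G2 > 0"
  shows "IN4 Xb R1 B2 B3 B4 G1 G2 y1 y2 y3 = (if y1 then (if y2 then (if y3 then 0 else (1+B3*G1*G2)*(B4*G2-B2*G1)/(B2*G1*(1+B4*G2))) else -1)
     else (if y2 then (if y3 then R1/(B4*G2) else R1*((1+B3*G1)/B2+1-B3*G1/(B4*G2))/(1+B4*G2)) else 0))"
  using assms
  apply (cases y1; cases y2; cases y3; simp only: IN4_def sum_qq)
  apply (simp_all add: gp_def mgen_def Rp_def)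
  apply (simp_all add: field_simps add_pos_pos mult_pos_pos pnz)
  done

lemma IN_b:
  assumes "R1 > 0" "B2 > 0" "B3 > 0" "B4 > 0" "G1 > 0" "G2 > 0"
  shows "IN Xb R1 B2 B3 B4 G1 G2 y1 y2 = (if y1 then (if y2 then (B4*G2-B2*G1)/(B2*G1*(1+B4*G2)) else -1)
     else (if y2 then R1*(1+B2)/(B2*(1+B4*G2)) else 0))"
  using assms
  apply (cases y1; cases y2; simp only: IN_def sum_qq)
  apply (simp_all add: gp_def IN4_b)
  apply (simp_all add: field_simps add_pos_pos mult_pos_pos pnz)
  done

lemma NEST_b:
  assumes "R1 > 0" "B2 > 0" "B3 > 0" "B4 > 0" "G1 > 0" "G2 > 0"
  shows "NEST Xb R1 B2 B3 B4 G1 G2 = 0"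
  using assms
  apply (simp only: NEST_def sum_qq)
  apply (simp add: IN_b gp_def)
  apply (simp_all add: field_simps add_pos_pos mult_pos_pos pnz)
  done

lemma IN4_c:
  assumes "R1 > 0" "B2 > 0" "B3 > 0" "B4 > 0" "G1 > 0" "G2 > 0"
  shows "IN4 Xc R1 B2 B3 B4 G1 G2 y1 y2 y3 = (if y1 then (if y2 then 0 else if y3 then B2*G1/R1 else (B4+B4*B2*G1+B4*B3*G2-B2*G1*B3*G2)/(R1*(1+B4)))
     else (if y2 then -1 else if y3 then B2/B4-1 else (B2-B4)*(B4-B3)/(B4*(1+B4))))"
  using assms
  apply (cases y1; cases y2; cases y3; simp only: IN4_def sum_qq)
  apply (simp_all add: gp_def mgen_def Rp_def)
  apply (simp_all add: field_simps add_pos_pos mult_pos_pos pnz)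
  done

lemma IN_c:
  assumes "R1 > 0" "B2 > 0" "B3 > 0" "B4 > 0" "G1 > 0" "G2 > 0"
  shows "IN Xc R1 B2 B3 B4 G1 G2 y1 y2 = (if y1 then (if y2 then 0 else B4*(1+B2*G1)/(R1*(1+B4)))
     else (if y2 then -1 else (B2-B4)/(1+B4)))"
  using assms
  apply (cases y1; cases y2; simp only: IN_def sum_qq)
  apply (simp_all add: gp_def IN4_c)
  apply (simp_all add: field_simps add_pos_pos mult_pos_pos pnz)
  done

lemma NEST_c:
  assumes "R1 > 0" "B2 > 0" "B3 > 0" "B4 > 0" "G1 > 0" "G2 > 0"
  shows "NEST Xc R1 B2 B3 B4 G1 G2 = 0"
  using assms
  apply (simp only: NEST_def sum_qq)
  apply (simp add: IN_c gp_def)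
  apply (simp_all add: field_simps add_pos_pos mult_pos_pos pnz)
  done

lemma IN4_d:
  assumes "R1 > 0" "B2 > 0" "B3 > 0" "B4 > 0" "G1 > 0" "G2 > 0"
  shows "IN4 Xd R1 B2 B3 B4 G1 G2 y1 y2 y3 = (if y1 then (if y2 then (if y3 then (B4*G1*G2/(B2*G1)-1)*(1-B4*G1*G2/(B3*G1*G2))/(1+B4*G1*G2) else B4*G2/B2-1) else -1)
     else (if y2 then (if y3 then R1*(1/B2+1/(B3*G1)-B4*G1*G2/(B2*(B3*G1))+1)/(1+B4*G1*G2) else R1/B2) else 0))"
  using assms
  apply (cases y1; cases y2; cases y3; simp only: IN4_def sum_qq)
  apply (simp_all add: gp_def mgen_def Rp_def)
  apply (simp_all add: field_simps add_pos_pos mult_pos_pos pnz)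
  done

lemma IN_d:
  assumes "R1 > 0" "B2 > 0" "B3 > 0" "B4 > 0" "G1 > 0" "G2 > 0"
  shows "IN Xd R1 B2 B3 B4 G1 G2 y1 y2 = (if y1 then (if y2 then (B4*G1*G2-B2*G1)/(B2*G1*(1+B4*G1*G2)) else -1)
     else (if y2 then R1*(1+B2)/(B2*(1+B4*G1*G2)) else 0))"
  using assms
  apply (cases y1; cases y2; simp only: IN_def sum_qq)
  apply (simp_all add: gp_def IN4_d)
  apply (simp_all add: field_simps add_pos_pos mult_pos_pos pnz)
  done

lemma NEST_d:
  assumes "R1 > 0" "B2 > 0" "B3 > 0" "B4 > 0" "G1 > 0" "G2 > 0"
  shows "NEST Xd R1 B2 B3 B4 G1 G2 = 0"
  using assms
  apply (simp only: NEST_def sum_qq)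
  apply (simp add: IN_d gp_def)
  apply (simp_all add: field_simps add_pos_pos mult_pos_pos pnz)
  done


lemma prod4: "(\<Prod>t\<in>{1..4::int}. f t) = f 1 * f 2 * f 3 * f 4"
proof -
  have "{1..4::int} = {1,2,3,4}" by auto
  then show ?thesis by (simp add: mult.assoc)
qed

lemma fac: "(let p = logistic u in if b then p else 1 - p) = qq (exp u) b"
proof -
  have "1 + exp u > 0" by (simp add: add_pos_pos)
  then show ?thesis by (simp add: logistic_def qq_def Let_def field_simps)
qed

lemma ediff1: "exp ((a::real) + c) / exp (b + c) = exp (a - b)"
  using exp_diff[of "a + c" "b + c"] by simp

lemma ediff2: "exp ((a::real) - b) * exp g = exp (a - b + g)"
  using exp_add[of "a - b" g] by simp

lemma m_gen:
  "m_fun \<xi> Y x \<beta> g1 g2 =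
   mgen \<xi> (Y 1) (Y 2) (Y 3) (Y 4) (\<lambda>t s. exp (zz Y x \<beta> g1 g2 t + \<alpha>) / exp (zz Y x \<beta> g1 g2 s + \<alpha>)) (exp g1)"
  unfolding m_fun_def mgen_def Let_def by (simp only: ediff1 ediff2)

lemma mgen_cong:
  assumes "\<And>t s. t \<in> {1,2,3,4} \<Longrightarrow> s \<in> {1,2,3,4} \<Longrightarrow> e t s = e' t s"
  shows "mgen \<xi> y1 y2 y3 y4 e G = mgen \<xi> y1 y2 y3 y4 e' G"
proof -
  have eqs: "e 1 2 = e' 1 2" "e 1 3 = e' 1 3" "e 1 4 = e' 1 4" "e 2 1 = e' 2 1" "e 2 3 = e' 2 3" "e 2 4 = e' 2 4" "e 3 1 = e' 3 1" "e 3 2 = e' 3 2" "e 3 4 = e' 3 4" "e 4 1 = e' 4 1" "e 4 2 = e' 4 2" "e 4 3 = e' 4 3"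
    by (rule assms; simp)+
  then show ?thesis unfolding mgen_def by (simp only: eqs)
qed

lemma Z1: "exp (zz (path ym1 y0 y1 y2 y3 y4) x \<beta> g1 g2 1 + \<alpha>) =
  exp (x 1 \<bullet> \<beta> + of_bool y0 * g1 + of_bool ym1 * g2 + \<alpha>)"
  by (simp add: zz_def path_def)

lemma Z2: "exp (zz (path ym1 y0 y1 y2 y3 y4) x \<beta> g1 g2 2 + \<alpha>) =
  exp (x 2 \<bullet> \<beta> + of_bool y0 * g2 + \<alpha>) * gp y1 (exp g1)"
  by (cases y1) (simp_all add: zz_def path_def gp_def mult_exp_exp algebra_simps)

lemma Z3: "exp (zz (path ym1 y0 y1 y2 y3 y4) x \<beta> g1 g2 3 + \<alpha>) =
  exp (x 3 \<bullet> \<beta> + \<alpha>) * gp y2 (exp g1) * gp y1 (exp g2)"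
  by (cases y1; cases y2) (simp_all add: zz_def path_def gp_def mult_exp_exp algebra_simps)

lemma Z4: "exp (zz (path ym1 y0 y1 y2 y3 y4) x \<beta> g1 g2 4 + \<alpha>) =
  exp (x 4 \<bullet> \<beta> + \<alpha>) * gp y3 (exp g1) * gp y2 (exp g2)"
  by (cases y2; cases y3) (simp_all add: zz_def path_def gp_def mult_exp_exp algebra_simps)

lemma term_eq:
  fixes x :: "int \<Rightarrow> real^'k" and \<beta> :: "real^'k" and g1 g2 \<alpha> :: real
    and ym1 y0 y1 y2 y3 y4 :: bool
  defines "R1 \<equiv> exp (x 1 \<bullet> \<beta> + of_bool y0 * g1 + of_bool ym1 * g2 + \<alpha>)"
    and "B2 \<equiv> exp (x 2 \<bullet> \<beta> + of_bool y0 * g2 + \<alpha>)"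
    and "B3 \<equiv> exp (x 3 \<bullet> \<beta> + \<alpha>)"
    and "B4 \<equiv> exp (x 4 \<bullet> \<beta> + \<alpha>)"
  shows "path_prob (path ym1 y0 y1 y2 y3 y4) x \<beta> g1 g2 \<alpha> * m_fun \<xi> (path ym1 y0 y1 y2 y3 y4) x \<beta> g1 g2 =
    qq R1 y1 * (qq (B2 * gp y1 (exp g1)) y2 * (qq (B3 * gp y2 (exp g1) * gp y1 (exp g2)) y3 *
      (qq (B4 * gp y3 (exp g1) * gp y2 (exp g2)) y4 *
        mgen \<xi> y1 y2 y3 y4 (\<lambda>t s. Rp R1 B2 B3 B4 (exp g1) (exp g2) y1 y2 y3 t /
                                    Rp R1 B2 B3 B4 (exp g1) (exp g2) y1 y2 y3 s) (exp g1))))"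
proof -
  let ?Y = "path ym1 y0 y1 y2 y3 y4"
  have Z: "exp (zz ?Y x \<beta> g1 g2 t + \<alpha>) = Rp R1 B2 B3 B4 (exp g1) (exp g2) y1 y2 y3 t"
    if "t \<in> {1,2,3,4}" for t
    using that by (auto simp: Rp_def R1_def B2_def B3_def B4_def Z1 Z2 Z3 Z4)
  have P: "path_prob ?Y x \<beta> g1 g2 \<alpha> =
    qq R1 y1 * qq (B2 * gp y1 (exp g1)) y2 * qq (B3 * gp y2 (exp g1) * gp y1 (exp g2)) y3 *
      qq (B4 * gp y3 (exp g1) * gp y2 (exp g2)) y4"
    unfolding path_prob_def prod4 fac
    by (simp add: R1_def B2_def B3_def B4_def Z1 Z2 Z3 Z4 path_def)
  have M: "m_fun \<xi> ?Y x \<beta> g1 g2 =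
    mgen \<xi> y1 y2 y3 y4 (\<lambda>t s. Rp R1 B2 B3 B4 (exp g1) (exp g2) y1 y2 y3 t /
                                    Rp R1 B2 B3 B4 (exp g1) (exp g2) y1 y2 y3 s) (exp g1)"
    unfolding m_gen[where \<alpha> = \<alpha>]
    by (simp add: path_def) (rule mgen_cong, simp add: Z)
  show ?thesis unfolding P M by (simp add: mult.assoc)
qed

lemma cond_nest:
  fixes x :: "int \<Rightarrow> real^'k"
  shows "cond_exp_m \<xi> ym1 y0 x \<alpha> \<beta> g1 g2 =
    NEST \<xi> (exp (x 1 \<bullet> \<beta> + of_bool y0 * g1 + of_bool ym1 * g2 + \<alpha>))
      (exp (x 2 \<bullet> \<beta> + of_bool y0 * g2 + \<alpha>)) (exp (x 3 \<bullet> \<beta> + \<alpha>)) (exp (x 4 \<bullet> \<beta> + \<alpha>))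
      (exp g1) (exp g2)"
  unfolding cond_exp_m_def NEST_def IN_def IN4_def term_eq sum_distrib_left
  by (rule refl)

theorem lemma3:
  fixes \<beta>0 :: "real^'k" and g01 g02 :: real
    and ym1 y0 :: bool and x :: "int \<Rightarrow> real^'k" and \<alpha> :: real and \<xi> :: xi
  shows "cond_exp_m \<xi> ym1 y0 x \<alpha> \<beta>0 g01 g02 = 0"
  unfolding cond_nest
  by (cases \<xi>) (simp_all add: NEST_a NEST_b NEST_c NEST_d)

end
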